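(* If an $(M,d_s,d_x,\epsilon)$ code exists, then \[\epsilon\ge\inf_{P_{ZY|X}}\ \sup_{P_{\bar X|\bar Z\bar Y}}\ \sup_{\gamma\ge0}\Big\{\mathbb P\big[f_{\bar X|\bar Z\bar Y}(S,X,Z,Y)\ge\gamma\big]-\exp(-\gamma)\Big\},\] where the infimum is over conditional distributions $P_{ZY|X}:\mathcal X\to\widehat{\mathcal S}\times\widehat{\mathcal X}$, $(S,X,Z,Y)\sim P_{SX}P_{ZY|X}$, the middle supremum is over conditional distributions $P_{\bar X|\bar Z\bar Y}:\widehat{\mathcal S}\times\widehat{\mathcal X}\to\mathcal X$ such that the Radon–Nikodym derivative of $P_{\bar X|\bar Z=z,\bar Y=y}$ with respect to $P_X$ at $x$ exists for $P_{ZY|X}P_X$-a.e. $(z,y,x)$, and \[f_{\bar X|\bar Z\bar Y}(s,x,z,y)=\log\frac{\mathrm dP_{\bar X|\bar Z=z,\bar Y=y}}{\mathrm dP_X}(x)+\sup_{\lambda_s\ge0}\lambda_s(\mathsf d_s(s,z)-d_s)+\sup_{\lambda_x\ge0}\lambda_x(\mathsf d_x(x,y)-d_x)-\log M.\]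
   Context: Let $\mathcal S,\mathcal X,\widehat{\mathcal S},\widehat{\mathcal X}$ be finite sets, $P_{SX}$ a distribution on $\mathcal S\times\mathcal X$, and $\mathsf d_s:\mathcal S\times\widehat{\mathcal S}\to[0,\infty)$, $\mathsf d_x:\mathcal X\times\widehat{\mathcal X}\to[0,\infty)$ distortion measures; fix $d_s,d_x\ge0$. An $(M,d_s,d_x,\epsilon)$ code is a random encoder $P_{U|X}:\mathcal X\to\{1,\dots,M\}$ and a random decoder $P_{ZY|U}:\{1,\dots,M\}\to\widehat{\mathcal S}\times\widehat{\mathcal X}$ (so $S-X-U-(Z,Y)$) such that $\mathbb P[\mathsf d_s(S,Z)>d_s\text{ or }\mathsf d_x(X,Y)>d_x]\le\epsilon$. $\log$ and $\exp$ are to a common base. *)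

theory Defs
  imports "HOL-Probability.Probability"
begin

definition elog :: "real \<Rightarrow> ennreal \<Rightarrow> ereal" where
  "elog b r = (if r = 0 then -\<infinity> else if r = \<infinity> then \<infinity> else ereal (log b (enn2real r)))"

definition is_code ::
  "('s \<times> 'x) pmf \<Rightarrow> ('s \<Rightarrow> 'zs \<Rightarrow> real) \<Rightarrow> ('x \<Rightarrow> 'yx \<Rightarrow> real) \<Rightarrow>
   nat \<Rightarrow> real \<Rightarrow> real \<Rightarrow> real \<Rightarrow> ('x \<Rightarrow> nat pmf) \<Rightarrow> (nat \<Rightarrow> ('zs \<times> 'yx) pmf) \<Rightarrow> bool" where
  "is_code PSX ds dx M Ds Dx eps enc dec \<longleftrightarrow>
     (\<forall>x. set_pmf (enc x) \<subseteq> {1..M}) \<and>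
     measure_pmf.prob
       (do { (s, x) \<leftarrow> PSX; u \<leftarrow> enc x; (z, y) \<leftarrow> dec u; return_pmf (s, x, z, y) })
       {(s, x, z, y). ds s z > Ds \<or> dx x y > Dx} \<le> eps"

definition joint_SXZY :: "('s \<times> 'x) pmf \<Rightarrow> ('x \<Rightarrow> ('zs \<times> 'yx) pmf) \<Rightarrow> ('s \<times> 'x \<times> 'zs \<times> 'yx) pmf" where
  "joint_SXZY PSX K = do { (s, x) \<leftarrow> PSX; (z, y) \<leftarrow> K x; return_pmf (s, x, z, y) }"

text \<open>Admissible backward channels: the Radon-Nikodym derivative of P_{Xbar|Zbar=z,Ybar=y}
  w.r.t. P_X exists (absolute continuity) for P_{ZY|X} P_X - a.e. (z,y,x).\<close>
definition admissible_back ::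
  "'x pmf \<Rightarrow> ('x \<Rightarrow> ('zs \<times> 'yx) pmf) \<Rightarrow> ('zs \<times> 'yx \<Rightarrow> 'x pmf) \<Rightarrow> bool" where
  "admissible_back PX K Q \<longleftrightarrow>
     (\<forall>x z y. pmf PX x * pmf (K x) (z, y) > 0 \<longrightarrow>
        absolutely_continuous (measure_pmf PX) (measure_pmf (Q (z, y))))"

definition f_info ::
  "real \<Rightarrow> 'x pmf \<Rightarrow> ('zs \<times> 'yx \<Rightarrow> 'x pmf) \<Rightarrow> ('s \<Rightarrow> 'zs \<Rightarrow> real) \<Rightarrow> ('x \<Rightarrow> 'yx \<Rightarrow> real) \<Rightarrow>
   nat \<Rightarrow> real \<Rightarrow> real \<Rightarrow> 's \<Rightarrow> 'x \<Rightarrow> 'zs \<Rightarrow> 'yx \<Rightarrow> ereal" where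
  "f_info b PX Q ds dx M Ds Dx s x z y =
     elog b (RN_deriv (measure_pmf PX) (measure_pmf (Q (z, y))) x)
     + (SUP ls\<in>{0::real..}. ereal (ls * (ds s z - Ds)))
     + (SUP lx\<in>{0::real..}. ereal (lx * (dx x y - Dx)))
     - ereal (log b (real M))"

end

theory Submission
  imports Defs
begin

lemma sup_zero:
  fixes c :: real assumes "c \<le> 0"
  shows "(SUP l\<in>{0::real..}. ereal (l * c)) = 0"
proof (rule antisym)
  show "(SUP l\<in>{0::real..}. ereal (l * c)) \<le> 0"
    by (rule SUP_least) (use assms in \<open>auto simp: mult_nonneg_nonpos\<close>)
  have "ereal (0 * c) \<le> (SUP l\<in>{0::real..}. ereal (l * c))"
    by (rule SUP_upper) auto
  then show "0 \<le> (SUP l\<in>{0::real..}. ereal (l * c))" by (simp add: zero_ereal_def)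
qed

lemma RN_pmf:
  fixes P Q :: "'a::finite pmf"
  assumes ac: "absolutely_continuous (measure_pmf P) (measure_pmf Q)"
  shows "ennreal (pmf Q x) = RN_deriv (measure_pmf P) (measure_pmf Q) x * ennreal (pmf P x)"
proof -
  have d: "density (measure_pmf P) (RN_deriv (measure_pmf P) (measure_pmf Q)) = measure_pmf Q"
    by (rule measure_pmf.density_RN_deriv) (auto simp: ac)
  have "ennreal (pmf Q x) = emeasure (measure_pmf Q) {x}" by (simp add: emeasure_pmf_single)
  also have "\<dots> = emeasure (density (measure_pmf P) (RN_deriv (measure_pmf P) (measure_pmf Q))) {x}"
    by (simp add: d)
  also have "\<dots> = (\<integral>\<^sup>+ y. RN_deriv (measure_pmf P) (measure_pmf Q) y * indicator {x} y \<partial>measure_pmf P)"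
    by (rule emeasure_density) auto
  also have "\<dots> = (\<integral>\<^sup>+ y. RN_deriv (measure_pmf P) (measure_pmf Q) x * indicator {x} y \<partial>measure_pmf P)"
    by (rule nn_integral_cong) (auto split: split_indicator)
  also have "\<dots> = RN_deriv (measure_pmf P) (measure_pmf Q) x * ennreal (pmf P x)"
    by (subst nn_integral_cmult_indicator) (auto simp: emeasure_pmf_single)
  finally show ?thesis .
qed

lemma count_bound:
  fixes P :: "'x::finite pmf" and Q :: "'zy::finite \<Rightarrow> 'x pmf"
    and enc :: "'x \<Rightarrow> nat pmf" and dec :: "nat \<Rightarrow> 'zy pmf"
    and C :: "'x \<Rightarrow> 'zy set" and c :: real
  assumes c: "c > 0" and enc: "\<And>x. set_pmf (enc x) \<subseteq> {1..M}"
    and CQ: "\<And>x zy. zy \<in> C x \<Longrightarrow> c * pmf P x \<le> pmf (Q zy) x"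
  shows "(\<Sum>x\<in>UNIV. (\<Sum>zy\<in>C x. pmf (bind_pmf (enc x) dec) zy) * pmf P x) \<le> real M / c"
proof -
  have K: "pmf (bind_pmf (enc x) dec) zy = (\<Sum>u\<in>{1..M}. pmf (dec u) zy * pmf (enc x) u)" for x zy
    unfolding pmf_bind using enc[of x]
    by (intro integral_measure_pmf_real) auto
  have Kle: "pmf (bind_pmf (enc x) dec) zy \<le> (\<Sum>u\<in>{1..M}. pmf (dec u) zy)" for x zy
    unfolding K by (intro sum_mono) (auto simp: pmf_le_1 mult_left_le)
  have "(\<Sum>x\<in>UNIV. (\<Sum>zy\<in>C x. pmf (bind_pmf (enc x) dec) zy) * pmf P x)
      = (\<Sum>x\<in>UNIV. \<Sum>zy\<in>C x. pmf (bind_pmf (enc x) dec) zy * pmf P x)"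
    by (simp add: sum_distrib_right)
  also have "\<dots> \<le> (\<Sum>x\<in>UNIV. \<Sum>zy\<in>C x. pmf (bind_pmf (enc x) dec) zy * (pmf (Q zy) x / c))"
  proof (intro sum_mono mult_left_mono)
    fix x zy assume "zy \<in> C x"
    then show "pmf P x \<le> pmf (Q zy) x / c" using CQ[of zy x] c by (simp add: field_simps)
  qed auto
  also have "\<dots> \<le> (\<Sum>x\<in>UNIV. \<Sum>zy\<in>UNIV. pmf (bind_pmf (enc x) dec) zy * (pmf (Q zy) x / c))"
    by (intro sum_mono sum_mono2) (use c in auto)
  also have "\<dots> \<le> (\<Sum>x\<in>UNIV. \<Sum>zy\<in>UNIV. (\<Sum>u\<in>{1..M}. pmf (dec u) zy) * (pmf (Q zy) x / c))"
    by (intro sum_mono mult_right_mono Kle) (use c in auto)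
  also have "\<dots> = (\<Sum>u\<in>{1..M}. \<Sum>zy\<in>UNIV. pmf (dec u) zy * (\<Sum>x\<in>UNIV. pmf (Q zy) x)) / c"
  proof -
    define g where "g u zy x = pmf (dec u) zy * pmf (Q zy) x / c" for u zy x
    have "(\<Sum>x\<in>UNIV. \<Sum>zy\<in>UNIV. \<Sum>u\<in>{1..M}. g u zy x) = (\<Sum>x\<in>UNIV. \<Sum>u\<in>{1..M}. \<Sum>zy\<in>UNIV. g u zy x)"
      by (rule sum.cong[OF refl], rule sum.swap)
    also have "\<dots> = (\<Sum>u\<in>{1..M}. \<Sum>x\<in>UNIV. \<Sum>zy\<in>UNIV. g u zy x)"
      by (rule sum.swap)
    also have "\<dots> = (\<Sum>u\<in>{1..M}. \<Sum>zy\<in>UNIV. \<Sum>x\<in>UNIV. g u zy x)"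
      by (rule sum.cong[OF refl], rule sum.swap)
    finally show ?thesis
      by (simp add: g_def sum_distrib_left sum_distrib_right sum_divide_distrib)
  qed
  also have "\<dots> = real M / c"
    by (simp add: sum_pmf_eq_1)
  finally show ?thesis .
qed

lemma key:
  fixes b p q \<gamma> :: real and R :: ennreal and M :: nat
  assumes b: "b > 1" and M: "M \<ge> 1" and p: "p > 0" and q: "q \<ge> 0"
    and eq: "ennreal q = R * ennreal p"
    and ge: "elog b R - ereal (log b (real M)) \<ge> ereal \<gamma>"
  shows "real M * b powr \<gamma> * p \<le> q"
proof (cases "R = 0")
  case True then show ?thesis using ge by (simp add: elog_def)
next
  case R0: False
  show ?thesis
  proof (cases "R = \<infinity>")
    case True then show ?thesis using eq p by (simp add: ennreal_mult_top)
  next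
    case False
    then obtain r where r: "R = ennreal r" "r \<ge> 0" by (cases R) auto
    with R0 have rpos: "r > 0" by auto
    have "elog b R = ereal (log b r)" using r rpos by (simp add: elog_def)
    with ge have lg: "log b r \<ge> \<gamma> + log b (real M)" by simp
    have "real M * b powr \<gamma> = b powr (\<gamma> + log b (real M))"
      using b M by (simp add: powr_add)
    also have "\<dots> \<le> b powr (log b r)" using lg b by (intro powr_mono) auto
    also have "\<dots> = r" using b rpos by simp
    finally have "real M * b powr \<gamma> \<le> r" .
    moreover have "q = r * p" using eq r p q
      by (simp add: ennreal_mult[symmetric])
    ultimately show ?thesis using p by (simp add: mult_right_mono)
  qed
qed

theorem theorem3:
  fixes PSX :: "('s::finite \<times> 'x::finite) pmf"
    and ds :: "'s \<Rightarrow> 'zs::finite \<Rightarrow> real"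
    and dx :: "'x \<Rightarrow> 'yx::finite \<Rightarrow> real"
    and M :: nat and Ds Dx eps b :: real
    and enc :: "'x \<Rightarrow> nat pmf" and dec :: "nat \<Rightarrow> ('zs \<times> 'yx) pmf"
  assumes "b > 1"
    and "\<And>s z. ds s z \<ge> 0" and "\<And>x y. dx x y \<ge> 0"
    and "Ds \<ge> 0" and "Dx \<ge> 0"
    and "is_code PSX ds dx M Ds Dx eps enc dec"
  shows "ereal eps \<ge>
    (INF K :: 'x \<Rightarrow> ('zs \<times> 'yx) pmf.
      SUP Q \<in> {Q. admissible_back (map_pmf snd PSX) K Q}.
        SUP \<gamma> \<in> {0::real..}.
          ereal (measure_pmf.prob (joint_SXZY PSX K)
                   {(s, x, z, y). f_info b (map_pmf snd PSX) Q ds dx M Ds Dx s x z y \<ge> ereal \<gamma>}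
                 - b powr (- \<gamma>)))"
proof -
  note b = assms(1)
  define P where "P = map_pmf snd PSX"
  define K0 where "K0 x = bind_pmf (enc x) dec" for x
  define J where "J = joint_SXZY PSX K0"
  define E where "E = {(s::'s, x::'x, z::'zs, y::'yx). ds s z > Ds \<or> dx x y > Dx}"
  have enc: "\<And>x. set_pmf (enc x) \<subseteq> {1..M}" using assms(6) by (simp add: is_code_def)
  have J_eq: "J = do { (s, x) \<leftarrow> PSX; u \<leftarrow> enc x; (z, y) \<leftarrow> dec u; return_pmf (s, x, z, y) }"
    unfolding J_def joint_SXZY_def K0_def by (simp add: bind_assoc_pmf case_prod_beta')
  have probE: "measure_pmf.prob J E \<le> eps"
    using assms(6) unfolding J_eq E_def is_code_def by simp
  have M1: "M \<ge> 1"
  proof -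
    obtain u where "u \<in> set_pmf (enc undefined)" using set_pmf_not_empty by fastforce
    with enc[of undefined] show ?thesis by auto
  qed
  have main: "measure_pmf.prob J
                   {(s, x, z, y). f_info b P Q ds dx M Ds Dx s x z y \<ge> ereal \<gamma>} \<le> eps + b powr (- \<gamma>)"
    if adm: "admissible_back P K0 Q" and g: "\<gamma> \<ge> 0" for Q \<gamma>
  proof -
    define A where "A = {(s, x, z, y). f_info b P Q ds dx M Ds Dx s x z y \<ge> ereal \<gamma>}"
    define c where "c = real M * b powr \<gamma>"
    have c: "c > 0" using M1 b by (simp add: c_def)
    define C where "C x = {(z, y). pmf P x > 0 \<and> c * pmf P x \<le> pmf (Q (z, y)) x}" for x
    define B where "B = {(s::'s, x, z, y). (z, y) \<in> C x}"
    have sub: "A \<inter> set_pmf J \<subseteq> E \<union> B"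
    proof
      fix w assume w: "w \<in> A \<inter> set_pmf J"
      obtain s x z y where wdef: "w = (s, x, z, y)" by (cases w) auto
      have sx: "(s, x) \<in> set_pmf PSX" and zy: "(z, y) \<in> set_pmf (K0 x)"
        using w unfolding wdef J_def joint_SXZY_def by auto
      have px: "pmf P x > 0" using sx unfolding P_def
        by (metis pmf_positive set_map_pmf image_eqI snd_conv)
      have kx: "pmf (K0 x) (z, y) > 0" using zy by (simp add: pmf_positive)
      have ac: "absolutely_continuous (measure_pmf P) (measure_pmf (Q (z, y)))"
        using adm mult_pos_pos[OF px kx] unfolding admissible_back_def by blast
      show "w \<in> E \<union> B"
      proof (cases "w \<in> E")
        case True then show ?thesis by simp
      next
        case False
        then have d1: "ds s z - Ds \<le> 0" and d2: "dx x y - Dx \<le> 0"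
          unfolding wdef E_def by auto
        have fge: "f_info b P Q ds dx M Ds Dx s x z y \<ge> ereal \<gamma>"
          using w unfolding wdef A_def by auto
        then have ge: "elog b (RN_deriv (measure_pmf P) (measure_pmf (Q (z, y))) x)
                        - ereal (log b (real M)) \<ge> ereal \<gamma>"
          unfolding f_info_def sup_zero[OF d1] sup_zero[OF d2] by simp
        have "c * pmf P x \<le> pmf (Q (z, y)) x"
          unfolding c_def by (rule key[OF b M1 px pmf_nonneg RN_pmf[OF ac] ge])
        then show ?thesis using px unfolding wdef B_def C_def by auto
      qed
    qed
    have Jalt: "J = bind_pmf PSX (\<lambda>sx. map_pmf (\<lambda>zy. (fst sx, snd sx, zy)) (K0 (snd sx)))"
      unfolding J_def joint_SXZY_def map_pmf_def
      by (intro bind_pmf_cong refl) (auto simp: case_prod_beta')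
    have "emeasure (measure_pmf J) B = (\<integral>\<^sup>+sx. emeasure (measure_pmf (K0 (snd sx))) (C (snd sx)) \<partial>measure_pmf PSX)"
      unfolding Jalt emeasure_bind_pmf
      by (intro nn_integral_cong) (auto simp: B_def intro!: arg_cong2[where f=emeasure])
    also have "\<dots> = (\<integral>\<^sup>+x. emeasure (measure_pmf (K0 x)) (C x) \<partial>measure_pmf P)"
      unfolding P_def by simp
    also have "\<dots> = (\<Sum>x\<in>UNIV. emeasure (measure_pmf (K0 x)) (C x) * pmf P x)"
      by (rule nn_integral_measure_pmf_support) auto
    also have "\<dots> = (\<Sum>x\<in>UNIV. ennreal ((\<Sum>zy\<in>C x. pmf (K0 x) zy) * pmf P x))"
    proof (intro sum.cong refl)
      fix x
      have "emeasure (measure_pmf (K0 x)) (C x) = ennreal (\<Sum>zy\<in>C x. pmf (K0 x) zy)"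
        by (simp add: emeasure_measure_pmf_finite sum_nonneg)
      then show "emeasure (measure_pmf (K0 x)) (C x) * ennreal (pmf P x)
          = ennreal ((\<Sum>zy\<in>C x. pmf (K0 x) zy) * pmf P x)"
        by (simp add: ennreal_mult sum_nonneg)
    qed
    also have "\<dots> = ennreal (\<Sum>x\<in>UNIV. (\<Sum>zy\<in>C x. pmf (K0 x) zy) * pmf P x)"
      by (rule sum_ennreal) (simp add: sum_nonneg)
    also have "\<dots> \<le> ennreal (real M / c)"
      unfolding K0_def
      by (intro ennreal_leI count_bound[OF c enc]) (auto simp: C_def)
    finally have "emeasure (measure_pmf J) B \<le> ennreal (real M / c)" .
    then have probB: "measure_pmf.prob J B \<le> real M / c"
      using c by (simp add: measure_pmf.emeasure_eq_measure)
    have Mc: "real M / c = b powr (- \<gamma>)"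
      using M1 b unfolding c_def by (simp add: powr_minus_divide)
    have "measure_pmf.prob J A = measure_pmf.prob J (A \<inter> set_pmf J)"
      by (simp add: measure_Int_set_pmf)
    also have "\<dots> \<le> measure_pmf.prob J (E \<union> B)"
      using sub by (intro measure_pmf.finite_measure_mono) auto
    also have "\<dots> \<le> measure_pmf.prob J E + measure_pmf.prob J B"
      by (rule measure_Un_le) auto
    also have "\<dots> \<le> eps + b powr (- \<gamma>)" using probE probB Mc by simp
    finally show ?thesis unfolding A_def .
  qed
  have "(SUP Q \<in> {Q. admissible_back P K0 Q}.
        SUP \<gamma> \<in> {0::real..}.
          ereal (measure_pmf.prob (joint_SXZY PSX K0)
                   {(s, x, z, y). f_info b P Q ds dx M Ds Dx s x z y \<ge> ereal \<gamma>}
                 - b powr (- \<gamma>))) \<le> ereal eps"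
  proof (intro SUP_least)
    fix Q \<gamma> assume "Q \<in> {Q. admissible_back P K0 Q}" "\<gamma> \<in> {0::real..}"
    then show "ereal (measure_pmf.prob (joint_SXZY PSX K0)
                   {(s, x, z, y). f_info b P Q ds dx M Ds Dx s x z y \<ge> ereal \<gamma>}
                 - b powr (- \<gamma>)) \<le> ereal eps"
      using main[of Q \<gamma>] unfolding J_def by simp
  qed
  then show ?thesis unfolding P_def
    by (meson INF_lower UNIV_I order_trans)
qed

end
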